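(* Assume Hypotheses 1, 2 and 3 (see context). For any $x\in\Gamma$ and any $\mathbf{x}\in\mathcal{C}(\mathbf{0})$, $$\|\Pi(Q(t,x)\mathbf{x})\|\ge\|\Pi(\mathbf{x})\|\exp\Big(\int_0^t\big(\alpha(\Phi(s,x))-\|D_zf(\Phi(s,x))\|\big)\,ds\Big)\quad\text{for all }t\ge0.$$
   Context: System $\dot x=F(x)$ with $F=(f,g)$, i.e. $\dot a=f(a,z)$, $\dot z=g(a,z)$, $(a,z)\in\mathbb{R}^n\times\mathbb{R}^m$, $X=\mathbb{R}^n\times\mathbb{R}^m$, flow $\Phi(t,x)$. Euclidean inner product, norm, operator norm. $\mathcal{L}(x_1,x_2)=\|a_2-a_1\|^2-\|z_2-z_1\|^2$, $\mathcal{C}(x)=\{x'\in X:\mathcal{L}(x',x)\ge0\}$, $\mathbf{0}$ the zero vector of $X$; $\Pi(a,z)=a$, $\Pi_\perp(a,z)=z$; $\mathbb{B}_d(x)=\{(a',z'):\|a'-a\|\le d,\|z'-z\|\le d\}$. $\Gamma\subseteq U$ positively invariant means $\Phi(t,x)$ is defined for all $t\ge0$ for $x\in\Gamma$ and $\Phi(t,\Gamma)\subseteq\Gamma$. Hypothesis 1: $U$ open and convex, and there is $d>0$ with $\mathcal{C}(x)\cap U\subset\mathbb{B}_d(x)$ for all $x\in U$. Hypothesis 2: $f,g$ are $C^1$ on $U$; there exist continuous $\alpha>0$, $\ell\ge0$ on $U$ and $c_1>0$ with, for all $x\in U$: $\langle a',D_af(x)a'\rangle\ge\alpha(x)\|a'\|^2$;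 $\langle z',D_zg(x)z'\rangle\le\ell(x)\|z'\|^2$; $\alpha(x)\ge\ell(x)+\|D_zf(x)\|+\|D_ag(x)\|+c_1$. Hypothesis 3: $\Gamma\subset U$ is positively invariant and $\Pi_\perp(\Gamma)=\Pi_\perp(U)$. For $x\in\Gamma$, $Q(t,x)$ ($t\ge0$) denotes the fundamental matrix solution of the variational equation $\dot{\mathbf{x}}=DF(\Phi(t,x))\mathbf{x}$ with $Q(0,x)=I$. *)

theory Defs
  imports "HOL-Analysis.Analysis"
begin

definition cone_L :: "((real^'n) \<times> (real^'m)) \<Rightarrow> ((real^'n) \<times> (real^'m)) \<Rightarrow> real" where
  "cone_L x1 x2 = (norm (fst x2 - fst x1))\<^sup>2 - (norm (snd x2 - snd x1))\<^sup>2"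

definition cone_C :: "((real^'n) \<times> (real^'m)) \<Rightarrow> ((real^'n) \<times> (real^'m)) set" where
  "cone_C x = {x'. cone_L x' x \<ge> 0}"

definition box_B :: "real \<Rightarrow> ((real^'n) \<times> (real^'m)) \<Rightarrow> ((real^'n) \<times> (real^'m)) set" where
  "box_B d x = {x'. norm (fst x' - fst x) \<le> d \<and> norm (snd x' - snd x) \<le> d}"

end

theory Submission
  imports Defs
begin

lemma growth:
  fixes u k u' :: "real \<Rightarrow> real"
  assumes t: "t \<ge> 0"
  and kc: "continuous_on {0..t} k"
  and du: "\<And>s. s \<in> {0..t} \<Longrightarrow> (u has_real_derivative u' s) (at s within {0..t})"
  and ineq: "\<And>s. s \<in> {0..t} \<Longrightarrow> u' s \<ge> 2 * k s * u s"
  shows "u t \<ge> u 0 * exp (2 * integral {0..t} k)"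
proof -
  define I where "I s = integral {0..s} k" for s
  define G where "G s = u s * exp (- 2 * I s)" for s
  have dI: "(I has_real_derivative k s) (at s within {0..t})" if "s \<in> {0..t}" for s
    using integral_has_vector_derivative[OF kc that] unfolding I_def
    by (simp add: has_real_derivative_iff_has_vector_derivative)
  have dG: "(G has_real_derivative (u' s * exp (- 2 * I s) + u s * (exp (- 2 * I s) * (- 2 * k s)))) (at s within {0..t})"
    if "s \<in> {0..t}" for s
    unfolding G_def
    by (rule derivative_eq_intros du[OF that] dI[OF that] refl | simp)+
  have pos: "u' s * exp (- 2 * I s) + u s * (exp (- 2 * I s) * (- 2 * k s)) \<ge> 0" if "s \<in> {0..t}" for s
  proof -
    have "u' s * exp (- 2 * I s) + u s * (exp (- 2 * I s) * (- 2 * k s)) = exp (- 2 * I s) * (u' s - 2 * k s * u s)"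
      by (simp add: algebra_simps)
    also have "\<dots> \<ge> 0" using ineq[OF that] by simp
    finally show ?thesis .
  qed
  have cont: "continuous_on {0..t} G"
    unfolding continuous_on_eq_continuous_within
    using dG by (meson DERIV_continuous)
  have "G 0 \<le> G t"
  proof (rule DERIV_nonneg_imp_increasing_open[OF t _ cont])
    fix s assume "0 < s" "s < t"
    then show "\<exists>y. DERIV G s :> y \<and> 0 \<le> y"
      using dG[of s] pos[of s] at_within_Icc_at[of 0 s t] by auto
  qed
  moreover have "G 0 = u 0" by (simp add: G_def I_def)
  moreover have "u t = G t * exp (2 * I t)" by (simp add: G_def exp_minus field_simps flip: exp_add)
  ultimately show ?thesis unfolding I_def
    by (metis exp_gt_zero less_eq_real_def mult_right_mono)
qed

lemma vd_fst: "(w has_vector_derivative W) F \<Longrightarrow> ((\<lambda>s. fst (w s)) has_vector_derivative fst W) F"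
  unfolding has_vector_derivative_def by (drule has_derivative_fst) simp
lemma vd_snd: "(w has_vector_derivative W) F \<Longrightarrow> ((\<lambda>s. snd (w s)) has_vector_derivative snd W) F"
  unfolding has_vector_derivative_def by (drule has_derivative_snd) simp
lemma inner_deriv:
  fixes w :: "real \<Rightarrow> 'a::real_inner"
  assumes "(w has_vector_derivative W) (at s within S)"
  shows "((\<lambda>s. inner (w s) (w s)) has_real_derivative 2 * inner (w s) W) (at s within S)"
proof -
  have d: "(w has_derivative (\<lambda>h. h *\<^sub>R W)) (at s within S)"
    using assms unfolding has_vector_derivative_def .
  show ?thesis unfolding has_field_derivative_def
    by (rule has_derivative_eq_rhs[OF has_derivative_inner[OF d d]])
       (auto simp: inner_commute algebra_simps)
qed
lemma cont_onorm:
  fixes Df :: "'x::real_normed_vector \<Rightarrow> ('a::real_normed_vector \<times> 'b::real_normed_vector) \<Rightarrow>\<^sub>L 'c::real_normed_vector"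
  assumes "continuous_on S (\<lambda>s. Df (y s))"
  shows "continuous_on S (\<lambda>s. onorm (\<lambda>z'. Df (y s) (0, z')))"
    "continuous_on S (\<lambda>s. onorm (\<lambda>a'. Df (y s) (a', 0)))"
proof -
  define E2 :: "'b \<Rightarrow>\<^sub>L ('a \<times> 'b)" where "E2 = Blinfun (\<lambda>z. (0, z))"
  define E1 :: "'a \<Rightarrow>\<^sub>L ('a \<times> 'b)" where "E1 = Blinfun (\<lambda>z. (z, 0))"
  have a2: "blinfun_apply E2 = (\<lambda>z. (0, z))" unfolding E2_def
    by (rule bounded_linear_Blinfun_apply) (intro bounded_linear_Pair bounded_linear_zero bounded_linear_ident)
  have a1: "blinfun_apply E1 = (\<lambda>z. (z, 0))" unfolding E1_def
    by (rule bounded_linear_Blinfun_apply) (intro bounded_linear_Pair bounded_linear_zero bounded_linear_ident)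
  have "(\<lambda>s. onorm (\<lambda>z'. Df (y s) (0, z'))) = (\<lambda>s. norm (Df (y s) o\<^sub>L E2))"
  proof -
    have "\<And>s. blinfun_apply (Df (y s) o\<^sub>L E2) = (\<lambda>z'. Df (y s) (0, z'))" by (rule ext) (simp add: a2)
    then show ?thesis by (simp add: norm_blinfun.rep_eq)
  qed
  moreover have "continuous_on S (\<lambda>s. norm (Df (y s) o\<^sub>L E2))"
    by (intro continuous_intros assms)
  ultimately show "continuous_on S (\<lambda>s. onorm (\<lambda>z'. Df (y s) (0, z')))" by (simp only:)
  have "(\<lambda>s. onorm (\<lambda>z'. Df (y s) (z', 0))) = (\<lambda>s. norm (Df (y s) o\<^sub>L E1))"
  proof -
    have "\<And>s. blinfun_apply (Df (y s) o\<^sub>L E1) = (\<lambda>z'. Df (y s) (z', 0))" by (rule ext) (simp add: a1)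
    then show ?thesis by (simp add: norm_blinfun.rep_eq)
  qed
  moreover have "continuous_on S (\<lambda>s. norm (Df (y s) o\<^sub>L E1))"
    by (intro continuous_intros assms)
  ultimately show "continuous_on S (\<lambda>s. onorm (\<lambda>z'. Df (y s) (z', 0)))" by (simp only:)
qed
lemma arith1:
  fixes al be ga l P Q c :: real
  assumes "al \<ge> l + be + ga + c" "c > 0" "be \<ge> 0" "ga \<ge> 0" "P \<ge> 0" "Q \<ge> 0" "l \<ge> 0"
  shows "al * P\<^sup>2 - be * P * Q - (l * Q\<^sup>2 + ga * P * Q) \<ge> (be/2 + ga/2 + l) * (P\<^sup>2 - Q\<^sup>2)"
proof -
  have h1: "(al - l - be - ga) * P\<^sup>2 \<ge> 0" using assms by auto
  have h2: "be * (P - Q)\<^sup>2 \<ge> 0" "ga * (P - Q)\<^sup>2 \<ge> 0" using assms by auto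
  show ?thesis using h1 h2 unfolding power2_eq_square by (simp add: algebra_simps)
qed
theorem lemma2p5:
  fixes f :: "(real^'n) \<times> (real^'m) \<Rightarrow> (real^'n)"
    and g :: "(real^'n) \<times> (real^'m) \<Rightarrow> (real^'m)"
    and Df :: "(real^'n) \<times> (real^'m) \<Rightarrow> ((real^'n) \<times> (real^'m)) \<Rightarrow>\<^sub>L (real^'n)"
    and Dg :: "(real^'n) \<times> (real^'m) \<Rightarrow> ((real^'n) \<times> (real^'m)) \<Rightarrow>\<^sub>L (real^'m)"
    and U \<Gamma> :: "((real^'n) \<times> (real^'m)) set"
    and d c1 :: real
    and \<alpha> ell :: "(real^'n) \<times> (real^'m) \<Rightarrow> real"
    and \<Phi> :: "real \<Rightarrow> (real^'n) \<times> (real^'m) \<Rightarrow> (real^'n) \<times> (real^'m)"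
    and Q :: "real \<Rightarrow> (real^'n) \<times> (real^'m) \<Rightarrow> (real^'n) \<times> (real^'m) \<Rightarrow> (real^'n) \<times> (real^'m)"
  assumes H1_open: "open U"
    and H1_convex: "convex U"
    and H1_d: "d > 0"
    and H1_cone: "\<forall>x\<in>U. cone_C x \<inter> U \<subseteq> box_B d x"
    and H2_f_deriv: "\<forall>x\<in>U. (f has_derivative blinfun_apply (Df x)) (at x)"
    and H2_g_deriv: "\<forall>x\<in>U. (g has_derivative blinfun_apply (Dg x)) (at x)"
    and H2_Df_cont: "continuous_on U Df"
    and H2_Dg_cont: "continuous_on U Dg"
    and H2_alpha_cont: "continuous_on U \<alpha>"
    and H2_ell_cont: "continuous_on U ell"
    and H2_alpha_pos: "\<forall>x\<in>U. \<alpha> x > 0"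
    and H2_ell_nonneg: "\<forall>x\<in>U. ell x \<ge> 0"
    and H2_c1: "c1 > 0"
    and H2_Daf: "\<forall>x\<in>U. \<forall>a'. inner a' (Df x (a', 0)) \<ge> \<alpha> x * (norm a')\<^sup>2"
    and H2_Dzg: "\<forall>x\<in>U. \<forall>z'. inner z' (Dg x (0, z')) \<le> ell x * (norm z')\<^sup>2"
    and H2_gap: "\<forall>x\<in>U. \<alpha> x \<ge> ell x + onorm (\<lambda>z'. Df x (0, z')) + onorm (\<lambda>a'. Dg x (a', 0)) + c1"
    and flow: "\<forall>x\<in>\<Gamma>. \<Phi> 0 x = x \<and>
                 (\<forall>t\<ge>0. ((\<lambda>s. \<Phi> s x) has_vector_derivative (f (\<Phi> t x), g (\<Phi> t x))) (at t within {0..}))"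
    and H3_sub: "\<Gamma> \<subseteq> U"
    and H3_invariant: "\<forall>x\<in>\<Gamma>. \<forall>t\<ge>0. \<Phi> t x \<in> \<Gamma>"
    and H3_proj: "snd ` \<Gamma> = snd ` U"
    and Q_init: "\<forall>x\<in>\<Gamma>. \<forall>v. Q 0 x v = v"
    and Q_var: "\<forall>x\<in>\<Gamma>. \<forall>v. \<forall>t\<ge>0. ((\<lambda>s. Q s x v) has_vector_derivative
                  (Df (\<Phi> t x) (Q t x v), Dg (\<Phi> t x) (Q t x v))) (at t within {0..})"
  shows "\<forall>x\<in>\<Gamma>. \<forall>v\<in>cone_C 0. \<forall>t\<ge>0.
           norm (fst (Q t x v)) \<ge> norm (fst v) *
             exp (integral {0..t} (\<lambda>s. \<alpha> (\<Phi> s x) - onorm (\<lambda>z'. Df (\<Phi> s x) (0, z'))))"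
  proof (intro ballI allI impI)
  fix x v :: "(real^'n) \<times> (real^'m)" and t :: real
  assume xG: "x \<in> \<Gamma>" and vC: "v \<in> cone_C 0" and t: "t \<ge> 0"
  define y where "y s = \<Phi> s x" for s
  define w where "w s = Q s x v" for s
  define be where "be s = onorm (\<lambda>z'. Df (y s) (0, z'))" for s
  define ga where "ga s = onorm (\<lambda>a'. Dg (y s) (a', 0))" for s
  have yG: "s \<ge> 0 \<Longrightarrow> y s \<in> \<Gamma>" for s using H3_invariant xG y_def by auto
  have yU: "s \<ge> 0 \<Longrightarrow> y s \<in> U" for s using yG H3_sub by auto
  have ycont: "continuous_on {0..} y"
    unfolding continuous_on_eq_continuous_within
  proof
    fix s :: real assume "s \<in> {0..}"
    then have "(y has_vector_derivative (f (\<Phi> s x), g (\<Phi> s x))) (at s within {0..})"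
      using flow xG unfolding y_def by auto
    then show "continuous (at s within {0..}) y"
      by (rule has_vector_derivative_continuous)
  qed
  have ycont': "continuous_on {0..} (\<lambda>s. Df (y s))"
    by (rule continuous_on_compose2[OF H2_Df_cont ycont]) (use yU in auto)
  have ycont'': "continuous_on {0..} (\<lambda>s. Dg (y s))"
    by (rule continuous_on_compose2[OF H2_Dg_cont ycont]) (use yU in auto)
  have acont: "continuous_on {0..} (\<lambda>s. \<alpha> (y s))"
    by (rule continuous_on_compose2[OF H2_alpha_cont ycont]) (use yU in auto)
  have lcont: "continuous_on {0..} (\<lambda>s. ell (y s))"
    by (rule continuous_on_compose2[OF H2_ell_cont ycont]) (use yU in auto)
  have becont: "continuous_on {0..} be" unfolding be_def by (rule cont_onorm(1)[where Df=Df and y=y, OF ycont'])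
  have gacont: "continuous_on {0..} ga" unfolding ga_def by (rule cont_onorm(2)[where Df=Dg and y=y, OF ycont''])
  have bl1: "bounded_linear (\<lambda>z'. Df (y s) (0, z'))" for s
    by (intro bounded_linear_compose[OF blinfun.bounded_linear_right] bounded_linear_Pair bounded_linear_zero bounded_linear_ident)
  have bl2: "bounded_linear (\<lambda>a'. Dg (y s) (a', 0))" for s
    by (intro bounded_linear_compose[OF blinfun.bounded_linear_right] bounded_linear_Pair bounded_linear_zero bounded_linear_ident)
  have be0: "be s \<ge> 0" for s unfolding be_def by (rule onorm_pos_le[OF bl1])
  have ga0: "ga s \<ge> 0" for s unfolding ga_def by (rule onorm_pos_le[OF bl2])
  have dw: "(w has_vector_derivative (Df (y s) (w s), Dg (y s) (w s))) (at s within {0..})" if "s \<ge> 0" for s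
    using Q_var xG that unfolding w_def y_def by blast
  have ineqA: "inner (fst (w s)) (Df (y s) (w s)) \<ge> \<alpha> (y s) * (norm (fst (w s)))\<^sup>2 - be s * norm (fst (w s)) * norm (snd (w s))"
    if "s \<ge> 0" for s
  proof -
    define P where "P = fst (w s)"
    define R where "R = snd (w s)"
    have ws: "w s = (P, 0) + (0, R)" by (simp add: P_def R_def)
    have "inner P (Df (y s) (w s)) = inner P (Df (y s) (P, 0)) + inner P (Df (y s) (0, R))"
      by (simp only: ws blinfun.add_right inner_add_right)
    moreover have "inner P (Df (y s) (P, 0)) \<ge> \<alpha> (y s) * (norm P)\<^sup>2" using H2_Daf yU[OF that] by auto
    moreover have "\<bar>inner P (Df (y s) (0, R))\<bar> \<le> norm P * (be s * norm R)"
    proof -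
      have "\<bar>inner P (Df (y s) (0, R))\<bar> \<le> norm P * norm (Df (y s) (0, R))" by (rule Cauchy_Schwarz_ineq2)
      also have "\<dots> \<le> norm P * (be s * norm R)"
        unfolding be_def by (intro mult_left_mono onorm[OF bl1]) auto
      finally show ?thesis .
    qed
    ultimately show ?thesis unfolding P_def[symmetric] R_def[symmetric] by (simp add: algebra_simps; linarith)
  qed
  have ineqB: "inner (snd (w s)) (Dg (y s) (w s)) \<le> ell (y s) * (norm (snd (w s)))\<^sup>2 + ga s * norm (fst (w s)) * norm (snd (w s))"
    if "s \<ge> 0" for s
  proof -
    define P where "P = fst (w s)"
    define R where "R = snd (w s)"
    have ws: "w s = (P, 0) + (0, R)" by (simp add: P_def R_def)
    have "inner R (Dg (y s) (w s)) = inner R (Dg (y s) (P, 0)) + inner R (Dg (y s) (0, R))"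
      by (simp only: ws blinfun.add_right inner_add_right)
    moreover have "inner R (Dg (y s) (0, R)) \<le> ell (y s) * (norm R)\<^sup>2" using H2_Dzg yU[OF that] by auto
    moreover have "\<bar>inner R (Dg (y s) (P, 0))\<bar> \<le> norm R * (ga s * norm P)"
    proof -
      have "\<bar>inner R (Dg (y s) (P, 0))\<bar> \<le> norm R * norm (Dg (y s) (P, 0))" by (rule Cauchy_Schwarz_ineq2)
      also have "\<dots> \<le> norm R * (ga s * norm P)"
        unfolding ga_def by (intro mult_left_mono onorm[OF bl2]) auto
      finally show ?thesis .
    qed
    ultimately show ?thesis unfolding P_def[symmetric] R_def[symmetric] by (simp add: algebra_simps; linarith)
  qed
  have cone: "norm (snd (w s)) \<le> norm (fst (w s))" if s0: "s \<ge> 0" for s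
  proof -
    define u where "u r = inner (fst (w r)) (fst (w r)) - inner (snd (w r)) (snd (w r))" for r
    define u' where "u' r = 2 * inner (fst (w r)) (Df (y r) (w r)) - 2 * inner (snd (w r)) (Dg (y r) (w r))" for r
    define k where "k r = be r / 2 + ga r / 2 + ell (y r)" for r
    have "u s \<ge> u 0 * exp (2 * integral {0..s} k)"
    proof (rule growth[OF s0])
      show "continuous_on {0..s} k" unfolding k_def
        by (intro continuous_intros continuous_on_subset[OF becont] continuous_on_subset[OF gacont]
             continuous_on_subset[OF lcont]) auto
      fix r assume r: "r \<in> {0..s}"
      have d: "(w has_vector_derivative (Df (y r) (w r), Dg (y r) (w r))) (at r within {0..s})"
        using dw[of r] r by (auto intro: has_vector_derivative_within_subset)
      show "(u has_real_derivative u' r) (at r within {0..s})"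
        unfolding u_def u'_def
        using DERIV_diff[OF inner_deriv[OF vd_fst[OF d]] inner_deriv[OF vd_snd[OF d]]] by simp
      have r0: "r \<ge> 0" using r by auto
      have gap: "\<alpha> (y r) \<ge> ell (y r) + be r + ga r + c1" using H2_gap yU[OF r0] unfolding be_def ga_def by auto
      have "\<alpha> (y r) * (norm (fst (w r)))\<^sup>2 - be r * norm (fst (w r)) * norm (snd (w r))
          - (ell (y r) * (norm (snd (w r)))\<^sup>2 + ga r * norm (fst (w r)) * norm (snd (w r)))
          \<ge> k r * ((norm (fst (w r)))\<^sup>2 - (norm (snd (w r)))\<^sup>2)"
        unfolding k_def by (rule arith1[OF gap H2_c1 be0 ga0]) (use H2_ell_nonneg yU[OF r0] in auto)
      moreover have "u r = (norm (fst (w r)))\<^sup>2 - (norm (snd (w r)))\<^sup>2"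
        unfolding u_def by (simp only: power2_norm_eq_inner)
      ultimately show "u' r \<ge> 2 * k r * u r"
        using ineqA[OF r0] ineqB[OF r0] unfolding u'_def by (simp only: mult.assoc; linarith)
    qed
    moreover have "u 0 \<ge> 0"
    proof -
      have wv: "w 0 = v" using Q_init xG unfolding w_def by blast
      have "cone_L v 0 \<ge> 0" using vC by (simp add: cone_C_def)
      then have "(norm (fst v))\<^sup>2 - (norm (snd v))\<^sup>2 \<ge> 0" by (simp add: cone_L_def)
      then show ?thesis unfolding u_def wv power2_norm_eq_inner[symmetric] .
    qed
    ultimately have us: "u s \<ge> 0" using mult_nonneg_nonneg[OF _ exp_ge_zero, of "u 0" "2 * integral {0..s} k"] by linarith
    have "(norm (snd (w s)))\<^sup>2 \<le> (norm (fst (w s)))\<^sup>2"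
      using us unfolding u_def power2_norm_eq_inner by linarith
    then show ?thesis by (rule power2_le_imp_le) simp_all
  qed
  define u where "u r = inner (fst (w r)) (fst (w r))" for r
  define u' where "u' r = 2 * inner (fst (w r)) (Df (y r) (w r))" for r
  define k where "k = (\<lambda>s. \<alpha> (\<Phi> s x) - onorm (\<lambda>z'. Df (\<Phi> s x) (0, z')))"
  have kk: "k r = \<alpha> (y r) - be r" for r unfolding k_def be_def y_def by simp
  have "u t \<ge> u 0 * exp (2 * integral {0..t} k)"
  proof (rule growth[OF t])
    show "continuous_on {0..t} k" unfolding kk[abs_def]
      by (intro continuous_intros continuous_on_subset[OF becont] continuous_on_subset[OF acont]) auto
    fix r assume r: "r \<in> {0..t}"
    have d: "(w has_vector_derivative (Df (y r) (w r), Dg (y r) (w r))) (at r within {0..t})"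
      using dw[of r] r by (auto intro: has_vector_derivative_within_subset)
    show "(u has_real_derivative u' r) (at r within {0..t})"
      unfolding u_def u'_def using inner_deriv[OF vd_fst[OF d]] by simp
    have r0: "r \<ge> 0" using r by auto
    have "be r * norm (fst (w r)) * norm (snd (w r)) \<le> be r * norm (fst (w r)) * norm (fst (w r))"
      using cone[OF r0] be0[of r] by (intro mult_left_mono) auto
    moreover have uval: "u r = (norm (fst (w r)))\<^sup>2"
      unfolding u_def by (simp only: power2_norm_eq_inner)
    moreover have "2 * (\<alpha> (y r) - be r) * (norm (fst (w r)))\<^sup>2 = 2 * (\<alpha> (y r) * (norm (fst (w r)))\<^sup>2) - 2 * (be r * norm (fst (w r)) * norm (fst (w r)))"
      by (simp add: power2_eq_square algebra_simps)
    ultimately show "u' r \<ge> 2 * k r * u r"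
      using ineqA[OF r0] unfolding u'_def kk uval by linarith
  qed
  moreover have "w 0 = v" using Q_init xG unfolding w_def by blast
  moreover have "exp (2 * integral {0..t} k) = (exp (integral {0..t} k))\<^sup>2"
    by (simp only: power2_eq_square mult_2 exp_add)
  ultimately have "(norm (fst v) * exp (integral {0..t} k))\<^sup>2 \<le> (norm (fst (w t)))\<^sup>2"
    unfolding u_def by (simp only: power2_norm_eq_inner[symmetric] power_mult_distrib)
  then have "norm (fst v) * exp (integral {0..t} k) \<le> norm (fst (w t))"
    by (rule power2_le_imp_le) simp_all
  then show "norm (fst v) * exp (integral {0..t} (\<lambda>s. \<alpha> (\<Phi> s x) - onorm (\<lambda>z'. Df (\<Phi> s x) (0, z'))))
      \<le> norm (fst (Q t x v))" unfolding k_def w_def .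
qed

end
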